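(* Let $K\subseteq\mathbb{R}^d$ be closed, convex, line-free and with non-empty interior, and let $\alpha\in\operatorname{Int}(\operatorname{rec}(K)^* )\setminus\{0\}$ with $\inf_{x\in K}\alpha^\top x=0$. Let $c_{K,\alpha}:=\int_K e^{-\alpha^\top x}\,dx$. Then \[ \gamma(d,t):=1-e^{-t}\sum_{\ell=0}^{d-1}\frac{t^\ell}{\ell!}\leq\frac{\mu_d(K_{\alpha,t}^+)}{c_{K,\alpha}}\leq e^t \] for all $t>0$. Moreover, if $1\le s\le t-1$, then \[ \mu_d(\breve K_{\alpha,t})\leq\frac{t^d-(t-1)^d}{s^d-(s-1)^d}\,\mu_d(\breve K_{\alpha,s}). \]
   Context: $\operatorname{rec}(K):=\{u:K+u\subseteq K\}$, $C^*:=\{\alpha:\alpha^\top x\ge0\ \forall x\in C\}$; $K$ is line-free if it contains no line. $K_{\alpha,t}^+:=K\cap\{x:\alpha^\top x\le t\}$ and $\breve K_{\alpha,t}:=K\cap\{x:t-1\le\alpha^\top x\le t\}$. $\mu_d$ is Lebesgue measure. *)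

theory Defs
  imports "HOL-Analysis.Analysis"
begin

definition rec_cone :: "'a::real_vector set \<Rightarrow> 'a set" where
  "rec_cone K = {u. (\<lambda>x. x + u) ` K \<subseteq> K}"

definition dual_cone :: "'a::real_inner set \<Rightarrow> 'a set" where
  "dual_cone C = {\<alpha>. \<forall>x\<in>C. \<alpha> \<bullet> x \<ge> 0}"

definition line_free :: "'a::real_vector set \<Rightarrow> bool" where
  "line_free K \<longleftrightarrow> \<not> (\<exists>x v. v \<noteq> 0 \<and> (\<forall>t::real. x + t *\<^sub>R v \<in> K))"

definition lower_cap :: "'a::real_inner set \<Rightarrow> 'a \<Rightarrow> real \<Rightarrow> 'a set" where
  "lower_cap K \<alpha> t = K \<inter> {x. \<alpha> \<bullet> x \<le> t}"

definition slab :: "'a::real_inner set \<Rightarrow> 'a \<Rightarrow> real \<Rightarrow> 'a set" where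
  "slab K \<alpha> t = K \<inter> {x. t - 1 \<le> \<alpha> \<bullet> x \<and> \<alpha> \<bullet> x \<le> t}"

definition gamma_fn :: "nat \<Rightarrow> real \<Rightarrow> real" where
  "gamma_fn d t = 1 - exp (- t) * (\<Sum>l<d. t ^ l / fact l)"

end

theory Submission
  imports Defs
begin

lemma dual_interior_bound:
  fixes K :: "'a::euclidean_space set"
  assumes "\<alpha> \<in> interior (dual_cone (rec_cone K))"
  obtains \<epsilon> where "\<epsilon> > 0" "\<And>u. u \<in> rec_cone K \<Longrightarrow> \<epsilon> * norm u \<le> \<alpha> \<bullet> u"
proof -
  obtain e where e: "e > 0" "ball \<alpha> e \<subseteq> dual_cone (rec_cone K)"
    using assms by (meson mem_interior)
  have "e/2 * norm u \<le> \<alpha> \<bullet> u" if u: "u \<in> rec_cone K" for u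
  proof (cases "u = 0")
    case True then show ?thesis by simp
  next
    case False
    define w where "w = \<alpha> - (e/2/norm u) *\<^sub>R u"
    have "dist \<alpha> w < e" using e False by (simp add: w_def dist_norm)
    then have "w \<in> dual_cone (rec_cone K)" using e by auto
    then have "w \<bullet> u \<ge> 0" using u unfolding dual_cone_def by auto
    then show ?thesis using False by (simp add: w_def inner_diff_left power2_norm_eq_inner[symmetric] power2_eq_square)
  qed
  then show ?thesis using that[of "e/2"] e by auto
qed

lemma cap_bounded:
  fixes K :: "'a::euclidean_space set"
  assumes K: "closed K" "convex K" and ep: "\<epsilon> > 0"
    and rb: "\<And>u. u \<in> rec_cone K \<Longrightarrow> \<epsilon> * norm u \<le> \<alpha> \<bullet> u"
  shows "bounded (K \<inter> {x. \<alpha> \<bullet> x \<le> t})"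
proof (rule ccontr)
  let ?C = "K \<inter> {x. \<alpha> \<bullet> x \<le> t}"
  assume nb: "\<not> bounded ?C"
  then have "?C \<noteq> {}" by auto
  then obtain p where p: "p \<in> K" by auto
  have "\<forall>n::nat. \<exists>x. x \<in> ?C \<and> norm (x - p) > real n + 1"
  proof
    fix n :: nat
    from nb have "\<not> (\<forall>y\<in>?C. dist p y \<le> real n + 1)"
      using bounded_any_center by blast
    then show "\<exists>x. x \<in> ?C \<and> norm (x - p) > real n + 1"
      by (auto simp: dist_norm norm_minus_commute not_le)
  qed
  then obtain x where x: "\<And>n. x n \<in> ?C" "\<And>n. norm (x n - p) > real n + 1"
    by metis
  have npos: "norm (x n - p) > 0" for n using x(2)[of n] 
    by (smt (verit) of_nat_0_le_iff)
  define v where "v n = (1 / norm (x n - p)) *\<^sub>R (x n - p)" for n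
  have vs: "v n \<in> sphere 0 1" for n using npos[of n] by (simp add: v_def)
  obtain l r where l: "l \<in> sphere 0 1" and r: "strict_mono r" and lim: "(v \<circ> r) \<longlonglongrightarrow> l"
    using compact_sphere[of "0::'a" 1] vs unfolding compact_eq_seq_compact_metric seq_compact_def
    by metis
  have mu0: "(\<lambda>n. 1 / norm (x (r n) - p)) \<longlonglongrightarrow> 0"
  proof (rule Lim_null_comparison)
    show "\<forall>\<^sub>F n in sequentially. norm (1 / norm (x (r n) - p)) \<le> 1 / (real n + 1)"
    proof (rule always_eventually, rule allI)
      fix n
      have "real n \<le> real (r n)" using seq_suble[OF r, of n] by simp
      then have "real n + 1 < norm (x (r n) - p)" using x(2)[of "r n"] by linarith
      then show "norm (1 / norm (x (r n) - p)) \<le> 1 / (real n + 1)"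
        by (simp add: frac_le)
    qed
    show "(\<lambda>n. 1 / (real n + 1)) \<longlonglongrightarrow> 0"
      using LIMSEQ_inverse_real_of_nat by (simp add: inverse_eq_divide add.commute)
  qed
  have "l \<in> rec_cone K"
    unfolding rec_cone_def
  proof (clarify)
    fix q assume q: "q \<in> K"
    define w where "w n = q + v (r n) + (1 / norm (x (r n) - p)) *\<^sub>R (p - q)" for n
    have "w \<longlonglongrightarrow> q + l + 0 *\<^sub>R (p - q)"
      unfolding w_def
      by (intro tendsto_intros mu0 lim[unfolded comp_def])
    moreover have "w n \<in> K" for n
    proof -
      let ?m = "1 / norm (x (r n) - p)"
      have m01: "0 \<le> ?m" "?m \<le> 1"
        using x(2)[of "r n"] npos[of "r n"] by (auto simp: divide_le_eq)
      have "w n = (1 - ?m) *\<^sub>R q + ?m *\<^sub>R x (r n)"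
        unfolding w_def v_def by (simp add: algebra_simps)
      then show ?thesis using convexD[OF K(2) q, of "x (r n)" "1 - ?m" ?m] x(1)[of "r n"] m01 by auto
    qed
    ultimately show "q + l \<in> K"
      using closed_sequentially[OF K(1)] by fastforce
  qed
  then have "\<epsilon> \<le> \<alpha> \<bullet> l" using rb l by fastforce
  moreover have "\<alpha> \<bullet> l \<le> 0"
  proof (rule tendsto_le[OF trivial_limit_sequentially])
    show "(\<lambda>n. \<alpha> \<bullet> v (r n)) \<longlonglongrightarrow> \<alpha> \<bullet> l"
      using lim unfolding comp_def by (intro tendsto_intros)
    show "(\<lambda>n. (\<bar>t\<bar> + \<bar>\<alpha> \<bullet> p\<bar>) * (1 / norm (x (r n) - p))) \<longlonglongrightarrow> 0"
      using tendsto_mult_right_zero[OF mu0] by simp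
    show "\<forall>\<^sub>F n in sequentially. \<alpha> \<bullet> v (r n) \<le> (\<bar>t\<bar> + \<bar>\<alpha> \<bullet> p\<bar>) * (1 / norm (x (r n) - p))"
    proof (rule always_eventually, rule allI)
      fix n
      have "\<alpha> \<bullet> x (r n) \<le> t" using x(1)[of "r n"] by auto
      then have "\<alpha> \<bullet> (x (r n) - p) \<le> \<bar>t\<bar> + \<bar>\<alpha> \<bullet> p\<bar>" by (simp add: inner_diff_right)
      then show "\<alpha> \<bullet> v (r n) \<le> (\<bar>t\<bar> + \<bar>\<alpha> \<bullet> p\<bar>) * (1 / norm (x (r n) - p))"
        using npos[of "r n"] by (simp add: v_def divide_right_mono)
    qed
  qed
  ultimately show False using ep by linarith
qed

lemma base_point:
  fixes K :: "'a::euclidean_space set"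
  assumes K: "closed K" "K \<noteq> {}" and bd: "\<And>t. bounded (K \<inter> {x. \<alpha> \<bullet> x \<le> t})"
    and inf: "(INF x\<in>K. \<alpha> \<bullet> x) = 0"
  obtains x0 where "x0 \<in> K" "\<alpha> \<bullet> x0 = 0" "\<And>x. x \<in> K \<Longrightarrow> 0 \<le> \<alpha> \<bullet> x"
proof -
  obtain B where B: "\<And>x. x \<in> K \<inter> {x. \<alpha> \<bullet> x \<le> 0} \<Longrightarrow> norm x \<le> B"
    using bd[of 0] unfolding bounded_iff by blast
  have lb: "min 0 (- norm \<alpha> * B) \<le> \<alpha> \<bullet> x" if "x \<in> K" for x
  proof (cases "\<alpha> \<bullet> x \<le> 0")
    case True
    then have "norm x \<le> B" using B that by auto
    moreover have "- (\<alpha> \<bullet> x) \<le> norm \<alpha> * norm x"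
      using Cauchy_Schwarz_ineq2[of \<alpha> x] by linarith
    ultimately have "- (\<alpha> \<bullet> x) \<le> norm \<alpha> * B"
      by (smt (verit) mult_left_mono norm_ge_zero)
    then show ?thesis by linarith
  qed auto
  have bdd: "bdd_below ((\<lambda>x. \<alpha> \<bullet> x) ` K)"
    using lb by (intro bdd_belowI2) 
  obtain y where y: "y \<in> K" "\<alpha> \<bullet> y < 1"
    using cInf_lessD[of "(\<lambda>x. \<alpha> \<bullet> x) ` K" 1] inf K(2) bdd by auto
  let ?C = "K \<inter> {x. \<alpha> \<bullet> x \<le> 1}"
  have "compact ?C"
    using bd[of 1] K(1) closed_halfspace_le[of \<alpha> 1]
    by (simp add: compact_eq_bounded_closed closed_Int)
  moreover have "?C \<noteq> {}" using y by auto
  moreover have "continuous_on ?C (\<lambda>x. \<alpha> \<bullet> x)" by (intro continuous_intros)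
  ultimately have "\<exists>x\<in>?C. \<forall>y\<in>?C. \<alpha> \<bullet> x \<le> \<alpha> \<bullet> y"
    by (rule continuous_attains_inf)
  then obtain x0 where x0: "x0 \<in> ?C" "\<And>z. z \<in> ?C \<Longrightarrow> \<alpha> \<bullet> x0 \<le> \<alpha> \<bullet> z"
    by blast
  have all: "\<alpha> \<bullet> x0 \<le> \<alpha> \<bullet> z" if "z \<in> K" for z
  proof (cases "\<alpha> \<bullet> z \<le> 1")
    case True then show ?thesis using x0 that by auto
  next
    case False then show ?thesis using x0 by auto
  qed
  have "\<alpha> \<bullet> x0 \<le> (INF x\<in>K. \<alpha> \<bullet> x)"
    using all K(2) by (intro cINF_greatest) auto
  moreover have "(INF x\<in>K. \<alpha> \<bullet> x) \<le> \<alpha> \<bullet> x0"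
    using x0 bdd by (intro cINF_lower) auto
  ultimately have "\<alpha> \<bullet> x0 = 0" using inf by linarith
  then show ?thesis using that[of x0] x0 all by auto
qed

lemma cap_image:
  fixes K :: "'a::euclidean_space set"
  assumes "convex K" "x0 \<in> K" "\<alpha> \<bullet> x0 = 0" "0 \<le> l" "l \<le> 1"
  shows "(\<lambda>x. l *\<^sub>R x + (1-l) *\<^sub>R x0) ` (K \<inter> {x. \<alpha> \<bullet> x \<le> u}) \<subseteq> K \<inter> {x. \<alpha> \<bullet> x \<le> l*u}"
proof
  fix y assume "y \<in> (\<lambda>x. l *\<^sub>R x + (1-l) *\<^sub>R x0) ` (K \<inter> {x. \<alpha> \<bullet> x \<le> u})"
  then obtain x where x: "x \<in> K" "\<alpha> \<bullet> x \<le> u" and y: "y = l *\<^sub>R x + (1-l) *\<^sub>R x0" by auto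
  have "y \<in> K"
    using convexD[OF assms(1) x(1) assms(2), of l "1-l"] assms y by auto
  moreover have "\<alpha> \<bullet> y \<le> l * u"
    using assms x y by (simp add: inner_add_right mult_left_mono)
  ultimately show "y \<in> K \<inter> {x. \<alpha> \<bullet> x \<le> l*u}" by auto
qed

lemma cap_compact:
  fixes K :: "'a::euclidean_space set"
  assumes "closed K" "\<And>t. bounded (K \<inter> {x. \<alpha> \<bullet> x \<le> t})"
  shows "compact (K \<inter> {x. \<alpha> \<bullet> x \<le> u})"
  using assms closed_halfspace_le[of \<alpha> u]
  by (simp add: compact_eq_bounded_closed closed_Int)

lemma scale_measure:
  fixes K :: "'a::euclidean_space set"
  assumes K: "convex K" "closed K" "\<And>t. bounded (K \<inter> {x. \<alpha> \<bullet> x \<le> t})"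
    and x0: "x0 \<in> K" "\<alpha> \<bullet> x0 = 0" and l: "0 < l" "l \<le> 1" and ab: "a \<le> b"
  defines "f \<equiv> \<lambda>u. measure lebesgue (K \<inter> {x. \<alpha> \<bullet> x \<le> u})"
  shows "l ^ DIM('a) * (f b - f a) \<le> f (l*b) - f (l*a)"
proof -
  define T where "T = (\<lambda>x::'a. l *\<^sub>R x + (1-l) *\<^sub>R x0)"
  let ?C = "\<lambda>u. K \<inter> {x. \<alpha> \<bullet> x \<le> u}"
  have cc: "compact (?C u)" for u using cap_compact[OF K(2,3)] .
  have lm: "?C u \<in> lmeasurable" for u using cc by (rule lmeasurable_compact)
  have Tc: "continuous_on UNIV T" unfolding T_def by (intro continuous_intros)
  have Tcc: "compact (T ` ?C u)" for u
    using cc Tc by (meson compact_continuous_image continuous_on_subset subset_UNIV)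
  have Tlm: "T ` ?C u \<in> lmeasurable" for u using Tcc by (rule lmeasurable_compact)
  have Tm: "measure lebesgue (T ` S) = l ^ DIM('a) * measure lebesgue S" for S
    using measure_lebesgue_affine[of l "(1-l) *\<^sub>R x0" S] l unfolding T_def by simp
  have inj: "inj T" unfolding T_def inj_def using l by auto
  have sub1: "?C a \<subseteq> ?C b" using ab by auto
  have sub2: "?C (l*a) \<subseteq> ?C (l*b)" using ab l by (auto intro: order_trans mult_left_mono)
  have im: "T ` ?C b - T ` ?C a \<subseteq> ?C (l*b) - ?C (l*a)"
  proof
    fix y assume y: "y \<in> T ` ?C b - T ` ?C a"
    then obtain x where x: "x \<in> ?C b" "y = T x" "x \<notin> ?C a" by auto
    have "y \<in> ?C (l*b)" using cap_image[OF K(1) x0 less_imp_le[OF l(1)] l(2), of b] x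
      unfolding T_def by auto
    moreover have "\<alpha> \<bullet> y = l * (\<alpha> \<bullet> x)" using x(2) x0 by (simp add: T_def inner_add_right)
    moreover have "l * a < l * (\<alpha> \<bullet> x)" using x(1,3) l by auto
    ultimately show "y \<in> ?C (l*b) - ?C (l*a)" by auto
  qed
  have "l ^ DIM('a) * (f b - f a) = measure lebesgue (T ` ?C b - T ` ?C a)"
  proof -
    have "measure lebesgue (T ` ?C b - T ` ?C a) = measure lebesgue (T ` ?C b) - measure lebesgue (T ` ?C a)"
      using Tlm[of b] Tlm[of a] image_mono[OF sub1, of T]
      by (intro measure_Diff) (auto simp: fmeasurable_def)
    then show ?thesis using Tm by (simp add: f_def right_diff_distrib)
  qed
  also have "\<dots> \<le> measure lebesgue (?C (l*b) - ?C (l*a))"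
    using im lm Tlm by (intro measure_mono_fmeasurable) auto
  also have "\<dots> = f (l*b) - f (l*a)"
    using lm[of "l*b"] lm[of "l*a"] sub2
    by (simp add: f_def, intro measure_Diff) (auto simp: fmeasurable_def)
  finally show ?thesis .
qed

lemma grid_step:
  fixes F :: "real \<Rightarrow> real"
  assumes Q: "\<And>x y m. 0 \<le> x \<Longrightarrow> x \<le> y \<Longrightarrow> 0 < m \<Longrightarrow> m \<le> 1 \<Longrightarrow> m * (F y - F x) \<le> F (m*y) - F (m*x)"
    and A: "0 < A" and r: "1 < r" and n: "0 < n" and S: "F (A * r^n) - F A = S * (A * r^n - A)"
  shows "S * (A / r^k - A / r^(Suc k)) \<le> F (A / r^k) - F (A / r^(Suc k))"
proof -
  have "\<exists>j<n. S * (A * r^Suc j - A * r^j) \<le> F (A * r^Suc j) - F (A * r^j)"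
  proof (rule ccontr)
    assume "\<not> ?thesis"
    then have lt: "\<And>j. j \<in> {..<n} \<Longrightarrow> F (A * r^Suc j) - F (A * r^j) < S * (A * r^Suc j - A * r^j)"
      by auto
    have "(\<Sum>j<n. F (A * r^Suc j) - F (A * r^j)) < (\<Sum>j<n. S * (A * r^Suc j - A * r^j))"
      using n lt by (intro sum_strict_mono) auto
    also have "\<dots> = S * (\<Sum>j<n. A * r^Suc j - A * r^j)" by (simp add: sum_distrib_left)
    also have "(\<Sum>j<n. A * r^Suc j - A * r^j) = A * r^n - A"
      using sum_lessThan_telescope[of "\<lambda>j. A * r^j" n] by simp
    finally have "(\<Sum>j<n. F (A * r^Suc j) - F (A * r^j)) < S * (A * r^n - A)" .
    moreover have "(\<Sum>j<n. F (A * r^Suc j) - F (A * r^j)) = F (A * r^n) - F A"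
      using sum_lessThan_telescope[of "\<lambda>j. F (A * r^j)" n] by simp
    ultimately show False using S by simp
  qed
  then obtain j where j: "S * (A * r^Suc j - A * r^j) \<le> F (A * r^Suc j) - F (A * r^j)" by blast
  define m where "m = 1 / r^(Suc k + j)"
  have rp: "0 < r" using r by simp
  have "1 \<le> r^(Suc k + j)" using r by (intro one_le_power) simp
  then have m: "0 < m" "m \<le> 1" using r by (auto simp: m_def)
  have x: "0 \<le> A * r^j" "A * r^j \<le> A * r^Suc j" using A r by auto
  have e1: "m * (A * r^Suc j) = A / r^k" using rp by (simp add: m_def power_add field_simps)
  have e2: "m * (A * r^j) = A / r^Suc k" using rp by (simp add: m_def power_add field_simps)
  have "S * (A / r^k - A / r^(Suc k)) = m * (S * (A * r^Suc j - A * r^j))"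
    by (simp only: right_diff_distrib e1[symmetric] e2[symmetric]) (simp add: algebra_simps)
  also have "\<dots> \<le> m * (F (A * r^Suc j) - F (A * r^j))"
    using j m by (simp add: mult_left_mono)
  also have "\<dots> \<le> F (A / r^k) - F (A / r^(Suc k))"
    using Q[OF x m] e1 e2 by simp
  finally show ?thesis .
qed

lemma grid_sum:
  fixes F :: "real \<Rightarrow> real"
  assumes step: "\<And>k. S * (A / r^k - A / r^(Suc k)) \<le> F (A / r^k) - F (A / r^(Suc k))"
    and "k1 \<le> k2"
  shows "S * (A / r^k1 - A / r^k2) \<le> F (A / r^k1) - F (A / r^k2)"
  using assms(2)
proof (induction k2 rule: dec_induct)
  case base then show ?case by simp
next
  case (step k)
  then show ?case using assms(1)[of k] by (simp add: algebra_simps)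
qed

lemma slope_r:
  fixes F :: "real \<Rightarrow> real"
  assumes mono: "\<And>x y. 0 \<le> x \<Longrightarrow> x \<le> y \<Longrightarrow> F x \<le> F y"
    and Q: "\<And>x y m. 0 \<le> x \<Longrightarrow> x \<le> y \<Longrightarrow> 0 < m \<Longrightarrow> m \<le> 1 \<Longrightarrow> m * (F y - F x) \<le> F (m*y) - F (m*x)"
    and C: "0 < C" "C < D" "D \<le> A" and r: "1 < r" and n: "0 < n"
    and S: "F (A * r^n) - F A = S * (A * r^n - A)" "0 \<le> S"
  shows "S * (D / r - C * r) \<le> F D - F C"
proof (cases "D / r - C * r \<le> 0")
  case True
  then have "S * (D / r - C * r) \<le> 0" using S(2) by (simp add: mult_nonneg_nonpos)
  also have "0 \<le> F D - F C" using mono[of C D] C by simp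
  finally show ?thesis .
next
  case False
  have rp: "0 < r" using r by simp
  have A: "0 < A" using C by simp
  have step: "\<And>k. S * (A / r^k - A / r^(Suc k)) \<le> F (A / r^k) - F (A / r^(Suc k))"
    by (rule grid_step[OF Q A r n S(1)]) auto
  have anti: "A / r^k \<le> A / r^j" if "j \<le> k" for j k
    using that r A by (intro divide_left_mono power_increasing) auto
  have ex1: "\<exists>k. A / r^k \<le> D"
  proof -
    obtain k where "A / D < r^k" using real_arch_pow[OF r] by blast
    then show ?thesis using C rp by (intro exI[of _ k]) (simp add: field_simps)
  qed
  define k1 where "k1 = (LEAST k. A / r^k \<le> D)"
  have k1: "A / r^k1 \<le> D" unfolding k1_def using ex1 by (rule LeastI_ex)
  have k1b: "D / r \<le> A / r^k1"
  proof (cases k1)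
    case 0 then show ?thesis using C r by (simp add: divide_le_eq) (smt (verit) mult_le_cancel_left1)
  next
    case (Suc k)
    then have "\<not> A / r^k \<le> D" unfolding k1_def using not_less_Least[of k "\<lambda>k. A / r^k \<le> D"] by auto
    then show ?thesis using Suc rp by (simp add: field_simps)
  qed
  have ex2: "\<exists>k. A / r^k < C"
  proof -
    obtain k where "A / C < r^k" using real_arch_pow[OF r] by blast
    then show ?thesis using C rp by (intro exI[of _ k]) (simp add: field_simps)
  qed
  define k' where "k' = (LEAST k. A / r^k < C)"
  have k': "A / r^k' < C" unfolding k'_def using ex2 by (rule LeastI_ex)
  have Cr: "C < C * r" using C r by simp
  have "k1 < k'"
  proof (rule ccontr)
    assume "\<not> k1 < k'"
    then have "A / r^k1 \<le> A / r^k'" by (intro anti) auto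
    then show False using k' k1b False Cr by linarith
  qed
  then obtain k2 where k2: "k' = Suc k2" "k1 \<le> k2" by (cases k') auto
  have k2a: "C \<le> A / r^k2"
    using not_less_Least[of k2 "\<lambda>k. A / r^k < C"] k2 unfolding k'_def[symmetric] by auto
  have k2b: "A / r^k2 < C * r"
  proof -
    have "A / r^k2 = r * (A / r^k')" using k2 rp by (simp add: field_simps)
    moreover have "r * (A / r^k') < r * C" using k' rp by (intro mult_strict_left_mono)
    ultimately show ?thesis by (simp add: mult.commute)
  qed
  have "S * (D / r - C * r) \<le> S * (A / r^k1 - A / r^k2)"
    using S(2) k1b k2b by (intro mult_left_mono) auto
  also have "\<dots> \<le> F (A / r^k1) - F (A / r^k2)"
    by (rule grid_sum[OF step k2(2)])
  also have "\<dots> \<le> F D - F C"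
  proof -
    have "F (A / r^k1) \<le> F D" using k1 A rp by (intro mono) auto
    moreover have "F C \<le> F (A / r^k2)" using k2a C by (intro mono) auto
    ultimately show ?thesis by linarith
  qed
  finally show ?thesis .
qed

lemma slope_compare:
  fixes F :: "real \<Rightarrow> real"
  assumes mono: "\<And>x y. 0 \<le> x \<Longrightarrow> x \<le> y \<Longrightarrow> F x \<le> F y"
    and Q: "\<And>x y m. 0 \<le> x \<Longrightarrow> x \<le> y \<Longrightarrow> 0 < m \<Longrightarrow> m \<le> 1 \<Longrightarrow> m * (F y - F x) \<le> F (m*y) - F (m*x)"
    and C: "0 \<le> C" "C \<le> D" "D \<le> A" "A < B"
  shows "(F B - F A) * (D - C) \<le> (B - A) * (F D - F C)"
proof (cases "C = D")
  case True then show ?thesis by simp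
next
  case False
  then have CD: "C < D" using C by simp
  then have A: "0 < A" using C by simp
  define S where "S = (F B - F A) / (B - A)"
  have BA: "0 < B - A" using C by simp
  have S0: "0 \<le> S" unfolding S_def using mono[of A B] A C by simp
  have SB: "F B - F A = S * (B - A)" unfolding S_def using BA by simp
  have pos: "S * (D - c) \<le> F D - F c" if c: "0 < c" "c < D" for c
  proof -
    define r where "r n = root n (B / A)" for n
    have BA1: "1 < B / A" using A C by simp
    have b: "S * (D / r n - c * r n) \<le> F D - F c" if n: "0 < n" for n
    proof (rule slope_r[OF mono Q c(1) c(2) C(3) _ n _ S0])
      show "1 < r n" unfolding r_def using n BA1 by simp
      have "r n ^ n = B / A" unfolding r_def using n BA1 by (simp add: real_root_pow_pos2)
      then have "A * r n ^ n = B" using A by simp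
      then show "F (A * r n ^ n) - F A = S * (A * r n ^ n - A)" using SB by simp
    qed
    have lim: "(\<lambda>n. S * (D / r n - c * r n)) \<longlonglongrightarrow> S * (D / 1 - c * 1)"
      unfolding r_def using BA1 by (intro tendsto_intros LIMSEQ_root_const) auto
    show ?thesis
      using LIMSEQ_le_const2[OF lim] b by (metis One_nat_def div_by_1 mult_1_right not_le not_less_eq_eq not_one_le_zero)
  qed
  have main: "S * (D - C) \<le> F D - F C"
  proof (cases "C = 0")
    case False
    then show ?thesis using pos[of C] C CD by simp
  next
    case True
    define c where "c n = D / 2 * inverse (real (Suc n))" for n
    have cn: "0 < c n" "c n < D" for n
    proof -
      have "inverse (real (Suc n)) \<le> 1" by (simp add: inverse_le_1_iff)
      moreover have "0 < inverse (real (Suc n))" by auto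
      ultimately show "0 < c n" "c n < D" using CD True unfolding c_def
        by (auto intro: mult_pos_pos)
    qed
    have b: "S * (D - c n) \<le> F D - F 0" for n
      using pos[OF cn[of n]] mono[of 0 "c n"] cn[of n] by linarith
    have "(\<lambda>n. S * (D - c n)) \<longlonglongrightarrow> S * (D - 0)"
    proof (intro tendsto_intros)
      show "c \<longlonglongrightarrow> 0" unfolding c_def
        using tendsto_mult_right_zero[OF LIMSEQ_inverse_real_of_nat, of "D/2"] by simp
    qed
    then have "S * (D - 0) \<le> F D - F 0" using b by (intro LIMSEQ_le_const2) auto
    then show ?thesis using True by simp
  qed
  have "(F B - F A) * (D - C) = (B - A) * (S * (D - C))" using SB by simp
  also have "\<dots> \<le> (B - A) * (F D - F C)" using main BA by (intro mult_left_mono) auto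
  finally show ?thesis .
qed

lemma exp_as_integral:
  "ennreal (exp (- a)) = (\<integral>\<^sup>+u. ennreal (exp (-u)) * indicator {a..} u \<partial>lborel)"
proof -
  have "(\<integral>\<^sup>+u. ennreal (exp (-u)) * indicator {a..} u \<partial>lborel) = ennreal (0 - (- exp (- a)))"
  proof (rule nn_integral_FTC_atLeast)
    show "(\<lambda>u::real. exp (-u)) \<in> borel_measurable borel" by measurable
    show "DERIV (\<lambda>u. - exp (-u)) x :> exp (-x)" for x :: real
      by (auto intro!: derivative_eq_intros)
    show "((\<lambda>u::real. - exp (-u)) \<longlongrightarrow> 0) at_top"
      using tendsto_minus[OF filterlim_compose[OF exp_at_bot filterlim_uminus_at_bot_at_top]] by simp
  qed auto
  then show ?thesis by (metis diff_0 minus_minus)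
qed

lemma layer_cake_exp:
  fixes K :: "'a::euclidean_space set"
  assumes K: "closed K"
  shows "(\<integral>\<^sup>+x. ennreal (indicator K x * exp (-(\<alpha> \<bullet> x))) \<partial>lborel)
       = (\<integral>\<^sup>+u. ennreal (exp (-u)) * emeasure lborel (K \<inter> {x. \<alpha> \<bullet> x \<le> u}) \<partial>lborel)"
proof -
  have Kb[measurable]: "K \<in> sets borel" using K by (simp add: borel_closed)
  have "(\<integral>\<^sup>+x. ennreal (indicator K x * exp (-(\<alpha> \<bullet> x))) \<partial>lborel)
      = (\<integral>\<^sup>+x. (\<integral>\<^sup>+u. indicator K x * (ennreal (exp (-u)) * indicator {\<alpha> \<bullet> x..} u) \<partial>lborel) \<partial>lborel)"
  proof (rule nn_integral_cong)
    fix x :: 'a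
    have "ennreal (indicator K x * exp (-(\<alpha> \<bullet> x))) = indicator K x * ennreal (exp (-(\<alpha> \<bullet> x)))"
      by (simp add: ennreal_mult' indicator_def)
    also have "\<dots> = indicator K x * (\<integral>\<^sup>+u. ennreal (exp (-u)) * indicator {\<alpha> \<bullet> x..} u \<partial>lborel)"
      using exp_as_integral[of "\<alpha> \<bullet> x"] by simp
    also have "\<dots> = (\<integral>\<^sup>+u. indicator K x * (ennreal (exp (-u)) * indicator {\<alpha> \<bullet> x..} u) \<partial>lborel)"
      by (rule nn_integral_cmult[symmetric]) measurable
    finally show "ennreal (indicator K x * exp (-(\<alpha> \<bullet> x))) = \<dots>" .
  qed
  also have "\<dots> = (\<integral>\<^sup>+u. (\<integral>\<^sup>+x. indicator K x * (ennreal (exp (-u)) * indicator {\<alpha> \<bullet> x..} u) \<partial>lborel) \<partial>lborel)"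
    by (subst lborel_pair.Fubini') (auto simp: case_prod_unfold indicator_def cong: measurable_cong_sets)
  also have "\<dots> = (\<integral>\<^sup>+u. ennreal (exp (-u)) * emeasure lborel (K \<inter> {x. \<alpha> \<bullet> x \<le> u}) \<partial>lborel)"
  proof (rule nn_integral_cong)
    fix u :: real
    have s: "K \<inter> {x. \<alpha> \<bullet> x \<le> u} \<in> sets lborel" by measurable
    have "(\<integral>\<^sup>+x. indicator K x * (ennreal (exp (-u)) * indicator {\<alpha> \<bullet> x..} u) \<partial>lborel)
        = (\<integral>\<^sup>+x. ennreal (exp (-u)) * indicator (K \<inter> {x. \<alpha> \<bullet> x \<le> u}) x \<partial>lborel)"
      by (intro nn_integral_cong) (auto simp: indicator_def)
    also have "\<dots> = ennreal (exp (-u)) * emeasure lborel (K \<inter> {x. \<alpha> \<bullet> x \<le> u})"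
      using s by (rule nn_integral_cmult_indicator)
    finally show "(\<integral>\<^sup>+x. indicator K x * (ennreal (exp (-u)) * indicator {\<alpha> \<bullet> x..} u) \<partial>lborel) = \<dots>" .
  qed
  finally show ?thesis .
qed

lemma exp_poly_deriv:
  "((\<lambda>u::real. exp (-u) * (\<Sum>l\<le>d. u^l / fact l)) has_real_derivative (- exp (-u) * u^d / fact d)) (at u)"
proof (induction d)
  case 0
  then show ?case by (auto intro!: derivative_eq_intros)
next
  case (Suc d)
  have eq: "(\<lambda>u::real. exp (-u) * (\<Sum>l\<le>Suc d. u^l / fact l)) =
        (\<lambda>u. exp (-u) * (\<Sum>l\<le>d. u^l / fact l) + exp (-u) * (u^Suc d / fact (Suc d)))"
    by (simp add: algebra_simps)
  have e1: "((\<lambda>u::real. exp (-u)) has_real_derivative (- exp (-u))) (at u)"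
    by (auto intro!: derivative_eq_intros)
  have e2: "((\<lambda>u::real. u^Suc d / fact (Suc d)) has_real_derivative (real (Suc d) * u^d / fact (Suc d))) (at u)"
    using DERIV_cdivide[OF DERIV_pow[of "Suc d" u], of "fact (Suc d)"] by simp
  have d2: "((\<lambda>u::real. exp (-u) * (u^Suc d / fact (Suc d))) has_real_derivative
        (- exp (-u) * (u^Suc d / fact (Suc d)) + exp (-u) * (real (Suc d) * u^d / fact (Suc d)))) (at u)"
    using DERIV_mult[OF e1 e2] by (simp add: algebra_simps)
  have "- exp (-u) * u^d / fact d + (- exp (-u) * (u^Suc d / fact (Suc d)) + exp (-u) * (real (Suc d) * u^d / fact (Suc d)))
     = - exp (-u) * u^Suc d / fact (Suc d)"
  proof -
    have "real (Suc d) * u^d / fact (Suc d) = u^d / fact d"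
      by (simp add: fact_Suc field_simps del: of_nat_Suc)
    then show ?thesis by (simp add: algebra_simps)
  qed
  then show ?case unfolding eq using DERIV_add[OF Suc.IH d2] by simp
qed

lemma tail_integral:
  fixes t :: real assumes t: "0 \<le> t"
  shows "(\<integral>\<^sup>+u. ennreal (exp (-u) * u^d) * indicator {t..} u \<partial>lborel)
        = ennreal (fact d * exp (-t) * (\<Sum>l\<le>d. t^l / fact l))"
proof -
  define F where "F u = - fact d * (exp (-u) * (\<Sum>l\<le>d. u^l / fact l))" for u :: real
  have D: "DERIV F u :> exp (-u) * u^d" for u
  proof -
    have "DERIV F u :> - fact d * (- exp (-u) * u^d / fact d)"
      unfolding F_def by (intro DERIV_cmult exp_poly_deriv)
    then show ?thesis by simp
  qed
  have lim: "(F \<longlongrightarrow> 0) at_top"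
  proof -
    have l1: "((\<lambda>u::real. u^l / exp u / (fact l :: real)) \<longlongrightarrow> 0) at_top" for l
      using tendsto_divide[OF tendsto_power_div_exp_0[of l] tendsto_const[of "fact l"]] by simp
    have "((\<lambda>u::real. - fact d * (\<Sum>l\<le>d. u^l / exp u / fact l)) \<longlongrightarrow> - fact d * (\<Sum>l\<le>d. 0)) at_top"
      using l1 by (intro tendsto_mult tendsto_const tendsto_sum) auto
    moreover have "F = (\<lambda>u::real. - fact d * (\<Sum>l\<le>d. u^l / exp u / fact l))"
      unfolding F_def by (rule ext) (simp add: sum_distrib_left exp_minus field_simps)
    ultimately show ?thesis by simp
  qed
  have "(\<integral>\<^sup>+u. ennreal (exp (-u) * u^d) * indicator {t..} u \<partial>lborel) = ennreal (0 - F t)"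
    using t by (intro nn_integral_FTC_atLeast[OF _ D _ lim]) auto
  then show ?thesis by (simp add: F_def mult.assoc)
qed

lemma gamma_bound:
  fixes t :: real assumes t: "0 < t"
  shows "fact d * (1 - exp (-t) * (\<Sum>l<d. t^l / fact l)) \<le> t^d"
    and "0 \<le> 1 - exp (-t) * (\<Sum>l<d. t^l / fact l)"
proof -
  obtain \<xi> where xi: "\<bar>\<xi>\<bar> \<le> \<bar>t\<bar>" "exp t = (\<Sum>m<d. t^m / fact m) + (exp \<xi> / fact d) * t^d"
    using Maclaurin_exp_le[of t d] by blast
  have e0: "exp t - (\<Sum>l<d. t^l / fact l) = exp \<xi> * t^d / fact d" using xi(2) by simp
  have "1 - exp (-t) * (\<Sum>l<d. t^l / fact l) = exp (-t) * (exp t - (\<Sum>l<d. t^l / fact l))"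
    by (simp add: right_diff_distrib exp_minus)
  then have e: "1 - exp (-t) * (\<Sum>l<d. t^l / fact l) = exp (-t) * exp \<xi> * t^d / fact d"
    unfolding e0 by simp
  have "exp \<xi> \<le> exp t" using xi(1) t by simp
  then have "exp (-t) * exp \<xi> \<le> 1" by (simp add: exp_minus field_simps)
  then have "exp (-t) * exp \<xi> * t^d \<le> t^d" using t by (simp add: mult_left_le_one_le)
  then show "fact d * (1 - exp (-t) * (\<Sum>l<d. t^l / fact l)) \<le> t^d" unfolding e by simp
  show "0 \<le> 1 - exp (-t) * (\<Sum>l<d. t^l / fact l)" unfolding e using t by simp
qed

lemma gammaB:
  fixes t :: real assumes t: "0 < t"
  shows "(1 - exp (-t) * (\<Sum>l<d. t^l / fact l)) * ((1 - exp (-t)) + fact d * exp (-t) * (\<Sum>l\<le>d. t^l / fact l) / t^d) \<le> 1"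
proof -
  define e where "e = exp (-t)"
  define P where "P = (\<Sum>l<d. t^l / fact l)"
  define g where "g = 1 - e * P"
  have g1: "fact d * g \<le> t^d" and g0: "0 \<le> g" using gamma_bound[OF t, of d] by (simp_all add: g_def e_def P_def)
  have eP: "0 \<le> e * P" unfolding e_def P_def using t by (intro mult_nonneg_nonneg sum_nonneg) auto
  have Q: "(\<Sum>l\<le>d. t^l / fact l) = P + t^d / fact d"
    unfolding P_def by (simp add: lessThan_Suc_atMost[symmetric])
  have tp: "0 < t^d" using t by simp
  have B: "(1 - e) + fact d * e * (\<Sum>l\<le>d. t^l / fact l) / t^d = 1 + fact d * (e * P) / t^d"
  proof -
    have fd: "(fact d :: real) \<noteq> 0" by simp
    have h1: "fact d * e * (P + t^d / fact d) = fact d * (e * P) + e * t^d"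
      using fd by (simp add: distrib_left)
    have h2: "(fact d * (e * P) + e * t^d) / t^d = fact d * (e * P) / t^d + e"
      using t by (simp add: add_divide_distrib)
    show ?thesis unfolding Q h1 h2 by simp
  qed
  have "g * (1 + fact d * (e * P) / t^d) = g + (fact d * g) * (e * P) / t^d" by (simp add: field_simps)
  also have "\<dots> \<le> g + t^d * (e * P) / t^d"
    using g1 eP tp by (intro add_left_mono divide_right_mono mult_right_mono) auto
  also have "\<dots> = 1"
  proof -
    have "t^d * (e * P) / t^d = e * P" using tp by (metis less_irrefl nonzero_mult_div_cancel_left)
    then show ?thesis by (simp add: g_def)
  qed
  finally have X: "g * (1 + fact d * (e * P) / t^d) \<le> 1" .
  have "(1 - e * P) * ((1 - e) + fact d * e * (\<Sum>l\<le>d. t^l / fact l) / t^d) \<le> 1"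
    using X unfolding B g_def .
  then show ?thesis unfolding e_def P_def .
qed


theorem lemmaS17:
  fixes K :: "'a::euclidean_space set" and \<alpha> :: 'a
  assumes "closed K" and "convex K" and "line_free K" and "interior K \<noteq> {}"
    and "\<alpha> \<in> interior (dual_cone (rec_cone K)) - {0}"
    and "(INF x\<in>K. \<alpha> \<bullet> x) = 0"
  defines "c \<equiv> integral K (\<lambda>x. exp (- (\<alpha> \<bullet> x)))"
  shows "(\<forall>t::real. t > 0 \<longrightarrow>
            gamma_fn DIM('a) t \<le> measure lebesgue (lower_cap K \<alpha> t) / c
          \<and> measure lebesgue (lower_cap K \<alpha> t) / c \<le> exp t)
       \<and> (\<forall>s t::real. 1 \<le> s \<and> s \<le> t - 1 \<longrightarrow>
            measure lebesgue (slab K \<alpha> t)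
              \<le> (t ^ DIM('a) - (t - 1) ^ DIM('a)) / (s ^ DIM('a) - (s - 1) ^ DIM('a))
                 * measure lebesgue (slab K \<alpha> s))"
proof -
  define d where "d = DIM('a)"
  have d0: "0 < d" unfolding d_def by simp
  have ain: "\<alpha> \<in> interior (dual_cone (rec_cone K))" using assms(5) by blast
  obtain \<epsilon> where ep: "\<epsilon> > 0" "\<And>u. u \<in> rec_cone K \<Longrightarrow> \<epsilon> * norm u \<le> \<alpha> \<bullet> u"
    using dual_interior_bound[OF ain] by blast
  have bd: "\<And>t. bounded (K \<inter> {x. \<alpha> \<bullet> x \<le> t})"
    using cap_bounded[OF assms(1,2) ep(1)] ep(2) by blast
  have Kne: "K \<noteq> {}" using assms(4) interior_subset by blast
  obtain x0 where x0: "x0 \<in> K" "\<alpha> \<bullet> x0 = 0" "\<And>x. x \<in> K \<Longrightarrow> 0 \<le> \<alpha> \<bullet> x"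
    using base_point[OF assms(1) Kne bd assms(6)] by blast
  have Kb[measurable]: "K \<in> sets borel" using assms(1) by (simp add: borel_closed)
  define f where "f u = measure lebesgue (K \<inter> {x. \<alpha> \<bullet> x \<le> u})" for u
  have lc: "lower_cap K \<alpha> u = K \<inter> {x. \<alpha> \<bullet> x \<le> u}" for u by (simp add: lower_cap_def)
  have capc: "compact (K \<inter> {x. \<alpha> \<bullet> x \<le> u})" for u using cap_compact[OF assms(1) bd] .
  have caplm: "K \<inter> {x. \<alpha> \<bullet> x \<le> u} \<in> lmeasurable" for u using capc by (rule lmeasurable_compact)
  have capb: "K \<inter> {x. \<alpha> \<bullet> x \<le> u} \<in> sets borel" for u
    using capc by (simp add: borel_closed compact_imp_closed)
  have fmono: "f u \<le> f v" if "u \<le> v" for u v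
    unfolding f_def using that caplm[of u] caplm[of v]
    by (intro measure_mono_fmeasurable) (auto simp: fmeasurable_def)
  have f0: "0 \<le> f u" for u unfolding f_def by simp
  have fneg: "f u = 0" if "u < 0" for u
  proof -
    have "K \<inter> {x. \<alpha> \<bullet> x \<le> u} = {}" using x0(3) that by force
    then show ?thesis unfolding f_def by simp
  qed
  have fscale: "l ^ d * (f b - f a) \<le> f (l*b) - f (l*a)" if "0 < l" "l \<le> 1" "a \<le> b" for l a b
    using scale_measure[OF assms(2) assms(1) bd x0(1,2) that] unfolding f_def d_def by simp
  have fscale0: "l ^ d * f u \<le> f (l*u)" if "0 < l" "l \<le> 1" "0 \<le> u" for l u
  proof -
    have "l ^ d * (f u - f (-1)) \<le> f (l*u) - f (l*(-1))" using fscale[of l "-1" u] that by simp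
    moreover have "f (-1) = 0" "f (l*(-1)) = 0" using fneg that by auto
    ultimately show ?thesis by simp
  qed
  have emf: "emeasure lborel (K \<inter> {x. \<alpha> \<bullet> x \<le> u}) = ennreal (f u)" for u
  proof -
    have "emeasure lborel (K \<inter> {x. \<alpha> \<bullet> x \<le> u}) = ennreal (measure lborel (K \<inter> {x. \<alpha> \<bullet> x \<le> u}))"
      using emeasure_bounded_finite[OF bd[of u]] by (intro emeasure_eq_ennreal_measure) auto
    also have "measure lborel (K \<inter> {x. \<alpha> \<bullet> x \<le> u}) = f u"
      unfolding f_def using capb[of u] by (simp add: measure_completion)
    finally show ?thesis .
  qed
  define N where "N = (\<integral>\<^sup>+x. ennreal (indicator K x * exp (-(\<alpha> \<bullet> x))) \<partial>lborel)"
  have Nlc: "N = (\<integral>\<^sup>+u. ennreal (exp (-u)) * ennreal (f u) \<partial>lborel)"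
    unfolding N_def layer_cake_exp[OF assms(1)] emf ..
  define B where "B t = (1 - exp (-t)) + fact d * exp (-t) * (\<Sum>l\<le>d. t^l / fact l) / t^d" for t :: real
  have Nub: "N \<le> ennreal (f t * B t)" if t: "0 < t" for t
  proof -
    define h where "h u = f t * (exp (-u) * indicator {0..t} u) + f t / t^d * (exp (-u) * u^d * indicator {t..} u)" for u :: real
    have tp: "0 < t^d" using t by simp
    have hnn1: "0 \<le> f t * (exp (-u) * indicator {0..t} u)" for u
      using f0[of t] by (simp add: indicator_def)
    have hnn2: "0 \<le> f t / t^d * (exp (-u) * u^d * indicator {t..} u)" for u
      using f0[of t] tp t by (simp add: indicator_def)
    have pw: "exp (-u) * f u \<le> h u" for u
    proof (cases "u < 0")
      case True
      then show ?thesis using fneg[OF True] t by (simp add: h_def indicator_def)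
    next
      case False
      show ?thesis
      proof (cases "u \<le> t")
        case True
        have "exp (-u) * f u \<le> exp (-u) * f t" using fmono[OF True] by simp
        also have "\<dots> = f t * (exp (-u) * indicator {0..t} u)" using True False by (simp add: indicator_def)
        also have "\<dots> \<le> h u" unfolding h_def using hnn2[of u] by simp
        finally show ?thesis .
      next
        case gt: False
        define l where "l = t / u"
        have u0: "0 < u" using gt t by simp
        have l: "0 < l" "l \<le> 1" unfolding l_def using gt t u0 by auto
        have "l ^ d * f u \<le> f (l * u)" using fscale0[OF l] u0 by simp
        also have "l * u = t" unfolding l_def using u0 by simp
        finally have le: "l ^ d * f u \<le> f t" .
        have ud: "0 < u^d" using u0 by simp
        have one: "(u^d / t^d) * l ^ d = 1"
          unfolding l_def using u0 t by (simp add: power_divide)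
        have "f u = (u^d / t^d) * (l ^ d * f u)"
          using one by (metis mult.assoc mult_1)
        also have "\<dots> \<le> (u^d / t^d) * f t" using le ud tp by (intro mult_left_mono) auto
        finally have "f u \<le> f t / t^d * u^d" by (simp add: mult.commute)
        then have "exp (-u) * f u \<le> exp (-u) * (f t / t^d * u^d)" by (intro mult_left_mono) auto
        also have "\<dots> = h u" unfolding h_def using gt by (simp add: indicator_def)
        finally show ?thesis .
      qed
    qed
    have "N = (\<integral>\<^sup>+u. ennreal (exp (-u) * f u) \<partial>lborel)"
      unfolding Nlc using f0 by (intro nn_integral_cong) (simp add: ennreal_mult)
    also have "\<dots> \<le> (\<integral>\<^sup>+u. ennreal (h u) \<partial>lborel)"
      by (intro nn_integral_mono ennreal_leI pw)
    also have "(\<integral>\<^sup>+u. ennreal (h u) \<partial>lborel) = (\<integral>\<^sup>+u. ennreal (f t) * (ennreal (exp (-u)) * indicator {0..t} u)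
        + ennreal (f t / t^d) * (ennreal (exp (-u) * u^d) * indicator {t..} u) \<partial>lborel)"
    proof (intro nn_integral_cong)
      fix u :: real
      have "ennreal (h u) = ennreal (f t * (exp (-u) * indicator {0..t} u)) + ennreal (f t / t^d * (exp (-u) * u^d * indicator {t..} u))"
        unfolding h_def using hnn1[of u] hnn2[of u] by (rule ennreal_plus)
      also have "ennreal (f t * (exp (-u) * indicator {0..t} u)) = ennreal (f t) * (ennreal (exp (-u)) * indicator {0..t} u)"
        using f0[of t] by (cases "u \<in> {0..t}") (simp_all add: ennreal_mult)
      also have "ennreal (f t / t^d * (exp (-u) * u^d * indicator {t..} u)) = ennreal (f t / t^d) * (ennreal (exp (-u) * u^d) * indicator {t..} u)"
      proof (cases "u \<in> {t..}")
        case True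
        have nn: "0 \<le> f t / t^d" "0 \<le> exp (-u) * u^d" using f0[of t] tp t True by auto
        have i1: "indicator {t..} u = (1::real)" "indicator {t..} u = (1::ennreal)" using True by auto
        show ?thesis unfolding i1 mult_1_right by (rule ennreal_mult[OF nn])
      qed simp
      finally show "ennreal (h u) = ennreal (f t) * (ennreal (exp (-u)) * indicator {0..t} u)
        + ennreal (f t / t^d) * (ennreal (exp (-u) * u^d) * indicator {t..} u)" .
    qed
    also have "\<dots> = ennreal (f t) * (\<integral>\<^sup>+u. ennreal (exp (-u)) * indicator {0..t} u \<partial>lborel)
        + ennreal (f t / t^d) * (\<integral>\<^sup>+u. ennreal (exp (-u) * u^d) * indicator {t..} u \<partial>lborel)"
      by (subst nn_integral_add) (auto simp: nn_integral_cmult)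
    also have "(\<integral>\<^sup>+u. ennreal (exp (-u)) * indicator {0..t} u \<partial>lborel) = ennreal (1 - exp (-t))"
    proof -
      have "(\<integral>\<^sup>+u. ennreal (exp (-u)) * indicator {0..t} u \<partial>lborel) = ennreal ((- exp (-t)) - (- exp (-0)))"
      proof (rule nn_integral_FTC_Icc)
        show "(\<lambda>u::real. exp (-u)) \<in> borel_measurable borel" by measurable
        show "DERIV (\<lambda>u. - exp (-u)) x :> exp (-x)" for x :: real
          by (auto intro!: derivative_eq_intros)
      qed (use t in auto)
      then show ?thesis by simp
    qed
    also have "(\<integral>\<^sup>+u. ennreal (exp (-u) * u^d) * indicator {t..} u \<partial>lborel)
        = ennreal (fact d * exp (-t) * (\<Sum>l\<le>d. t^l / fact l))"
      using t by (intro tail_integral) simp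
    also have "ennreal (f t) * ennreal (1 - exp (-t)) + ennreal (f t / t^d) * ennreal (fact d * exp (-t) * (\<Sum>l\<le>d. t^l / fact l))
        = ennreal (f t * B t)"
    proof -
      have e1: "0 \<le> 1 - exp (-t)" using t by simp
      have e2: "0 \<le> fact d * exp (-t) * (\<Sum>l\<le>d. t^l / fact l)"
        using t by (intro mult_nonneg_nonneg sum_nonneg) auto
      have e3: "0 \<le> f t / t^d" using f0[of t] tp by simp
      have "ennreal (f t) * ennreal (1 - exp (-t)) + ennreal (f t / t^d) * ennreal (fact d * exp (-t) * (\<Sum>l\<le>d. t^l / fact l))
          = ennreal (f t * (1 - exp (-t)) + f t / t^d * (fact d * exp (-t) * (\<Sum>l\<le>d. t^l / fact l)))"
        unfolding ennreal_mult[OF f0[of t] e1, symmetric] ennreal_mult[OF e3 e2, symmetric]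
        by (rule ennreal_plus[symmetric]) (rule mult_nonneg_nonneg[OF f0[of t] e1], rule mult_nonneg_nonneg[OF e3 e2])
      also have "f t * (1 - exp (-t)) + f t / t^d * (fact d * exp (-t) * (\<Sum>l\<le>d. t^l / fact l)) = f t * B t"
        unfolding B_def by (simp add: algebra_simps)
      finally show ?thesis .
    qed
    finally show ?thesis .
  qed
  have Nfin: "N < \<infinity>" using Nub[of 1] by (simp add: le_less_trans)
  define c' where "c' = enn2real N"
  have Nc: "N = ennreal c'" unfolding c'_def using Nfin by simp
  have c'0: "0 \<le> c'" unfolding c'_def by simp
  have hi: "((\<lambda>x. exp (-(\<alpha> \<bullet> x))) has_integral c') K"
  proof -
    have "((\<lambda>x. indicator K x * exp (-(\<alpha> \<bullet> x))) has_integral c') UNIV"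
      using Nc c'0 unfolding N_def by (intro nn_integral_has_integral) auto
    moreover have "(\<lambda>x. indicator K x * exp (-(\<alpha> \<bullet> x))) = (\<lambda>x. if x \<in> K then exp (-(\<alpha> \<bullet> x)) else 0)"
      by (auto simp: indicator_def)
    ultimately show ?thesis using has_integral_restrict_UNIV by metis
  qed
  then have cc: "c = c'" unfolding c_def by (rule integral_unique)
  have lowN: "ennreal (exp (-t) * f t) \<le> N" for t
  proof -
    have "ennreal (exp (-t) * f t) = (\<integral>\<^sup>+x. ennreal (exp (-t)) * indicator (K \<inter> {x. \<alpha> \<bullet> x \<le> t}) x \<partial>lborel)"
      using nn_integral_cmult_indicator[of "K \<inter> {x. \<alpha> \<bullet> x \<le> t}" lborel "ennreal (exp (-t))"] capb[of t] emf[of t] f0[of t]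
      by (simp add: ennreal_mult)
    also have "\<dots> \<le> N" unfolding N_def
      by (intro nn_integral_mono) (auto simp: indicator_def intro!: ennreal_leI)
    finally show ?thesis .
  qed
  have lowc: "exp (-t) * f t \<le> c'" for t
    using lowN[of t] c'0 unfolding Nc by (simp add: ennreal_le_iff)
  have cpos: "0 < c'"
  proof -
    obtain p where p: "p \<in> interior K" using assms(4) by blast
    then obtain r where r: "r > 0" "ball p r \<subseteq> K" by (meson mem_interior)
    define u where "u = \<alpha> \<bullet> p + norm \<alpha> * r"
    have sub: "ball p r \<subseteq> K \<inter> {x. \<alpha> \<bullet> x \<le> u}"
    proof
      fix y assume y: "y \<in> ball p r"
      have "\<alpha> \<bullet> (y - p) \<le> norm \<alpha> * norm (y - p)" using Cauchy_Schwarz_ineq2[of \<alpha> "y - p"] by linarith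
      also have "\<dots> \<le> norm \<alpha> * r" using y by (intro mult_left_mono) (auto simp: dist_norm norm_minus_commute)
      finally have "\<alpha> \<bullet> y \<le> u" unfolding u_def by (simp add: inner_diff_right)
      then show "y \<in> K \<inter> {x. \<alpha> \<bullet> x \<le> u}" using y r by auto
    qed
    have "0 < measure lborel (ball p r)" by (rule content_ball_pos[OF r(1)])
    also have "measure lborel (ball p r) = measure lebesgue (ball p r)" by (simp add: measure_completion)
    also have "\<dots> \<le> f u" unfolding f_def using sub caplm[of u]
      by (intro measure_mono_fmeasurable) (auto simp: fmeasurable_def)
    finally have "0 < exp (-u) * f u" by simp
    then show ?thesis using lowc[of u] by linarith
  qed
  have part1: "gamma_fn d t \<le> f t / c' \<and> f t / c' \<le> exp t" if t: "0 < t" for t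
  proof
    have "ennreal c' \<le> ennreal (f t * B t)" using Nub[OF t] unfolding Nc .
    moreover have "0 \<le> B t" unfolding B_def using t by (intro add_nonneg_nonneg divide_nonneg_nonneg mult_nonneg_nonneg sum_nonneg) auto
    ultimately have cB: "c' \<le> f t * B t" using c'0 f0[of t] by (simp add: ennreal_le_iff)
    have g0: "0 \<le> gamma_fn d t" using gamma_bound(2)[OF t, of d] by (simp add: gamma_fn_def)
    have gB: "gamma_fn d t * B t \<le> 1" using gammaB[OF t, of d] by (simp add: gamma_fn_def B_def)
    have "gamma_fn d t * c' \<le> gamma_fn d t * (f t * B t)" using cB g0 by (rule mult_left_mono)
    also have "\<dots> = f t * (gamma_fn d t * B t)" by simp
    also have "\<dots> \<le> f t * 1" using gB f0[of t] by (intro mult_left_mono)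
    finally show "gamma_fn d t \<le> f t / c'" using cpos by (simp add: le_divide_eq)
    have "f t \<le> exp t * c'"
    proof -
      have "exp t * (exp (-t) * f t) \<le> exp t * c'" using lowc[of t] by (intro mult_left_mono) auto
      moreover have "exp t * exp (-t) = 1" by (simp add: exp_add[symmetric])
      ultimately show ?thesis by (metis mult.assoc mult_1)
    qed
    then show "f t / c' \<le> exp t" using cpos by (simp add: divide_le_eq mult.commute)
  qed
  have slabm: "measure lebesgue (slab K \<alpha> u) = f u - f (u - 1)" for u
  proof -
    have eq: "slab K \<alpha> u = (K \<inter> {x. \<alpha> \<bullet> x \<le> u} - K \<inter> {x. \<alpha> \<bullet> x \<le> u - 1}) \<union> (K \<inter> {x. \<alpha> \<bullet> x = u - 1})"
      unfolding slab_def by auto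
    have a0: "\<alpha> \<noteq> 0" using assms(5) by auto
    have "negligible (K \<inter> {x. \<alpha> \<bullet> x = u - 1})"
      using negligible_hyperplane[of \<alpha> "u - 1"] a0 by (rule_tac negligible_subset) auto
    then have nul: "K \<inter> {x. \<alpha> \<bullet> x = u - 1} \<in> null_sets lebesgue" by (simp add: negligible_iff_null_sets)
    have sub: "K \<inter> {x. \<alpha> \<bullet> x \<le> u - 1} \<subseteq> K \<inter> {x. \<alpha> \<bullet> x \<le> u}" by auto
    have "measure lebesgue (slab K \<alpha> u) = measure lebesgue (K \<inter> {x. \<alpha> \<bullet> x \<le> u} - K \<inter> {x. \<alpha> \<bullet> x \<le> u - 1})"
      unfolding eq using caplm[of u] caplm[of "u-1"] nul by (intro measure_Un_null_set) auto
    also have "\<dots> = f u - f (u - 1)"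
      unfolding f_def using caplm[of u] caplm[of "u-1"] sub by (intro measure_Diff) (auto simp: fmeasurable_def)
    finally show ?thesis .
  qed
  have part2: "f t - f (t - 1) \<le> (t ^ d - (t - 1) ^ d) / (s ^ d - (s - 1) ^ d) * (f s - f (s - 1))"
    if st: "1 \<le> s" "s \<le> t - 1" for s t
  proof -
    define F where "F w = f (root d w)" for w
    have mono: "F x \<le> F y" if "0 \<le> x" "x \<le> y" for x y
      unfolding F_def using that d0 by (intro fmono real_root_le_mono) auto
    have Q: "m * (F y - F x) \<le> F (m*y) - F (m*x)" if "0 \<le> x" "x \<le> y" "0 < m" "m \<le> 1" for x y m
    proof -
      define l where "l = root d m"
      have l: "0 < l" "l \<le> 1" unfolding l_def using that d0 by (auto simp: real_root_le_1_iff real_root_gt_zero)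
      have lm: "l ^ d = m" unfolding l_def using that d0 by simp
      have "l ^ d * (f (root d y) - f (root d x)) \<le> f (l * root d y) - f (l * root d x)"
        using that d0 by (intro fscale l real_root_le_mono) auto
      moreover have "l * root d y = root d (m*y)" "l * root d x = root d (m*x)"
        unfolding l_def by (simp_all add: real_root_mult)
      ultimately show ?thesis unfolding F_def lm by simp
    qed
    have sd: "(s - 1) ^ d < s ^ d" using st d0 by (intro power_strict_mono) auto
    have ord: "0 \<le> (s - 1) ^ d" "(s - 1) ^ d \<le> s ^ d" "s ^ d \<le> (t - 1) ^ d" "(t - 1) ^ d < t ^ d"
      using st d0 sd by (auto intro: power_mono power_strict_mono)
    have key: "(F (t^d) - F ((t-1)^d)) * (s^d - (s-1)^d) \<le> (t^d - (t-1)^d) * (F (s^d) - F ((s-1)^d))"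
      by (rule slope_compare[OF mono Q ord]) auto
    have rr: "root d (x ^ d) = x" if "0 \<le> x" for x using that d0 by (simp add: real_root_power_cancel)
    have "F (t^d) = f t" "F ((t-1)^d) = f (t-1)" "F (s^d) = f s" "F ((s-1)^d) = f (s-1)"
      unfolding F_def using st by (auto simp: rr)
    then have key2: "(f t - f (t-1)) * (s^d - (s-1)^d) \<le> (t^d - (t-1)^d) * (f s - f (s-1))"
      using key by simp
    have pos: "0 < s^d - (s-1)^d" using sd by simp
    show ?thesis using key2 pos by (simp add: le_divide_eq mult.commute)
  qed
  show ?thesis
    unfolding lc cc using part1 part2 slabm unfolding d_def f_def by auto
qed


end
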